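(* $$\sum_{n \geq 0} \binom{4n}{2n} \binom{2n}{n} \frac{ H_{n} - H_{n - 1/2} }{64^{n}} = \frac{\pi}{\sqrt{2}} - \frac{2 \sqrt{2}}{\pi} \ln^{2}\left( \sqrt{2} + 1 \right).$$
   Context: For real $a > -1$, the generalized harmonic number is $H_a = \sum_{k\ge 1}\left(\frac1k - \frac1{k+a}\right)$ (equivalently $H_a^{(b)} = \zeta(b) - \zeta(b,a+1)$ with $\zeta(b,\cdot)$ the Hurwitz zeta function, taken in the limit sense for $b=1$); it agrees with the usual harmonic number for nonnegative integers $a$, and e.g. $H_{-1/2} = -2\ln 2$. *)

theory Defs
  imports "HOL-Analysis.Analysis"
begin

definition gen_harm :: "real \<Rightarrow> real" where
  "gen_harm a = (\<Sum>k. 1 / real (Suc k) - 1 / (real (Suc k) + a))"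

end

theory Submission
  imports Defs
begin

definition bb :: "nat \<Rightarrow> real" where "bb n = real ((2*n) choose n) / 4^n"

lemma central_rec: "Suc n * (Suc (Suc (2*n)) choose Suc n) = 2 * (2*n+1) * ((2*n) choose n)"
proof -
  define A where "A = (Suc (Suc (2*n)) choose Suc n)"
  define B where "B = (Suc (2*n) choose n)"
  define C where "C = ((2*n) choose n)"
  have a: "Suc n * A = Suc (Suc (2*n)) * B"
    unfolding A_def B_def using Suc_times_binomial[of n "Suc (2*n)"] by (simp only: mult.commute)
  have b0: "Suc (2*n) * C = (Suc (2*n) choose Suc n) * Suc n"
    unfolding C_def by (rule Suc_times_binomial_eq)
  have b1: "(Suc (2*n) choose Suc n) = B"
    unfolding B_def using binomial_symmetric[of "Suc n" "Suc (2*n)"] by simp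
  have b: "Suc n * B = Suc (2*n) * C" using b0 b1 by (simp only: mult.commute)
  have "Suc n * (Suc n * A) = Suc n * (2 * (2*n+1) * C)"
  proof -
    have "Suc n * (Suc n * A) = Suc (Suc (2*n)) * (Suc n * B)" using a by (simp only: mult.left_commute)
    also have "\<dots> = Suc (Suc (2*n)) * (Suc (2*n) * C)" using b by simp
    also have "\<dots> = Suc n * (2 * (2*n+1) * C)" by (simp only: mult_Suc mult_Suc_right) (simp add: algebra_simps)
    finally show ?thesis .
  qed
  hence "Suc n * A = 2 * (2*n+1) * C" by (simp only: mult_left_cancel nat.distinct simp_thms)
  thus ?thesis unfolding A_def C_def .
qed

lemma bb_Suc: "bb (Suc n) = bb n * (2*n+1) / (2*n+2)"
proof -
  define A where "A = (Suc (Suc (2*n)) choose Suc n)"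
  define C where "C = ((2*n) choose n)"
  have "real (Suc n) * real A = 2 * (2*n+1) * real C"
    using arg_cong[OF central_rec[of n], of real] unfolding A_def C_def by (simp only: of_nat_mult of_nat_numeral)
  hence e: "real A = 2 * (2*n+1) * real C / (n+1)"
    by (simp add: field_simps)
  have "bb (Suc n) = real A / 4^(Suc n)" unfolding bb_def A_def by simp
  also have "\<dots> = bb n * (2*n+1) / (2*n+2)" unfolding e bb_def C_def
    by (simp add: divide_simps) (simp add: algebra_simps)
  finally show ?thesis .
qed

lemma bb_pos: "bb n > 0" unfolding bb_def by simp

lemma bb_gchoose: "bb n = ((-1/2) gchoose n) * (-1)^n"
proof (induction n)
  case 0 then show ?case by (simp add: bb_def)
next
  case (Suc n)
  define G where "G = ((-1/2::real) gchoose n)"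
  define G' where "G' = ((-1/2::real) gchoose (Suc n))"
  have "(-1/2::real) * G = real n * G + real (Suc n) * G'"
    unfolding G_def G'_def by (rule gbinomial_mult_1)
  hence "(-1/2::real) * G = real n * G + (real n + 1) * G'" by simp
  hence g0: "G' * (2*real n+2) = - G * (2*real n+1)" by algebra
  have nz: "(2*real n+2) \<noteq> 0" by simp
  have "G' = (G' * (2*real n+2)) / (2*real n+2)" using nz by simp
  also have "\<dots> = - G * (2*real n+1) / (2*real n+2)" by (simp only: g0)
  finally have g: "G' = - G * (2*real n+1) / (2*real n+2)" .
  have "bb (Suc n) = G * (-1)^n * (2*n+1) / (2*n+2)" using Suc bb_Suc[of n] unfolding G_def by simp
  also have "\<dots> = G' * (-1)^(Suc n)" unfolding g by (simp add: algebra_simps)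
  finally show ?case unfolding G'_def .
qed

lemma bb_series: assumes "0 \<le> x" "x < 1" shows "(\<lambda>n. bb n * x^n) sums (1 / sqrt (1 - x))"
proof -
  have ax: "\<bar>-x\<bar> < 1" using assms by simp
  have h1: "(\<lambda>n. ((-1/2) gchoose n) * (-x)^n) sums (1 + (-x)) powr (-1/2)"
    using gen_binomial_real[OF ax, of "-1/2"] .
  have h2: "(1 + (-x)) powr (-1/2) = 1 / sqrt (1 - x)"
  proof -
    have p: "0 \<le> 1 - x" using assms by simp
    have e1: "1 + (-x) = 1 - x" by (simp only: diff_conv_add_uminus)
    have e2: "(-1/2::real) = - (1/2)" by (simp only: minus_divide_left)
    have "(1 + (-x)) powr (-1/2) = inverse ((1 - x) powr (1/2))" unfolding e1 e2 by (rule powr_minus)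
    also have "(1 - x) powr (1/2) = sqrt (1 - x)" using p by (rule powr_half_sqrt)
    finally show ?thesis by (simp only: inverse_eq_divide)
  qed
  have h3: "((-1/2) gchoose n) * (-x)^n = bb n * x^n" for n
  proof -
    have "(-x)^n = (-1)^n * x^n" by (rule power_minus)
    thus ?thesis unfolding bb_gchoose by simp
  qed
  show ?thesis using h1 unfolding h2 h3 .
qed

lemma series_integral_swap:
  fixes f :: "nat \<Rightarrow> real \<Rightarrow> real" and g :: "real \<Rightarrow> real"
  assumes fi: "\<And>k. (f k has_integral I k) {a..b}"
    and f0: "\<And>k x. x \<in> {a..b} \<Longrightarrow> 0 \<le> f k x"
    and fs: "\<And>x. x \<in> {a..<b} \<Longrightarrow> (\<lambda>k. f k x) sums g x"
    and gi: "g integrable_on {a..b}"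
  shows "I sums integral {a..b} g"
proof -
  define f' where "f' k x = (if x = b then 0 else f k x)" for k x
  define g' where "g' x = (if x = b then 0 else g x)" for x
  have fi': "(f' k has_integral I k) {a..b}" for k
    by (rule has_integral_spike_finite[of "{b}" _ _ "f k", OF _ _ fi]) (auto simp: f'_def)
  have gi': "(g' has_integral integral {a..b} g) {a..b}"
    by (rule has_integral_spike_finite[of "{b}" _ _ g, OF _ _ integrable_integral[OF gi]]) (auto simp: g'_def)
  have f0': "x \<in> {a..b} \<Longrightarrow> 0 \<le> f' k x" for k x using f0 by (simp add: f'_def)
  have fs': "x \<in> {a..b} \<Longrightarrow> (\<lambda>k. f' k x) sums g' x" for x
    using fs[of x] by (cases "x = b") (auto simp: f'_def g'_def)
  define P where "P N x = (\<Sum>k<N. f' k x)" for N x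
  have Pi: "(P N has_integral (\<Sum>k<N. I k)) {a..b}" for N
    unfolding P_def by (rule has_integral_sum) (use fi' in auto)
  have Pmono: "x \<in> {a..b} \<Longrightarrow> P N x \<le> P (Suc N) x" for N x
    unfolding P_def using f0'[of x N] by simp
  have Plim: "x \<in> {a..b} \<Longrightarrow> (\<lambda>N. P N x) \<longlonglongrightarrow> g' x" for x
    using fs'[of x] unfolding P_def sums_def .
  have Ple: "x \<in> {a..b} \<Longrightarrow> P N x \<le> g' x" for N x
  proof -
    assume x: "x \<in> {a..b}"
    have "P N x \<le> suminf (\<lambda>k. f' k x)" unfolding P_def
      by (rule sum_le_suminf) (use fs'[OF x] f0'[OF x] in \<open>auto simp: sums_iff\<close>)
    thus ?thesis using fs'[OF x] by (simp add: sums_iff)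
  qed
  have P0: "x \<in> {a..b} \<Longrightarrow> 0 \<le> P N x" for N x
    unfolding P_def using f0' by (simp add: sum_nonneg)
  have intP: "integral {a..b} (P N) = (\<Sum>k<N. I k)" for N using Pi by (rule integral_unique)
  have bnd: "bounded (range (\<lambda>N. integral {a..b} (P N)))"
  proof -
    have "\<bar>integral {a..b} (P N)\<bar> \<le> integral {a..b} g" for N
    proof -
      have "0 \<le> integral {a..b} (P N)"
        by (rule integral_nonneg) (use Pi P0 in auto)
      moreover have "integral {a..b} (P N) \<le> integral {a..b} g'"
        by (rule integral_le) (use Pi gi' Ple in auto)
      moreover have "integral {a..b} g' = integral {a..b} g" using gi' by (rule integral_unique)
      ultimately show ?thesis by simp
    qed
    thus ?thesis unfolding bounded_real by blast
  qed
  have "g' integrable_on {a..b} \<and> (\<lambda>N. integral {a..b} (P N)) \<longlonglongrightarrow> integral {a..b} g'"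
    by (rule monotone_convergence_increasing) (use Pi Pmono Plim bnd in auto)
  hence "(\<lambda>N. \<Sum>k<N. I k) \<longlonglongrightarrow> integral {a..b} g" using intP integral_unique[OF gi'] by simp
  thus ?thesis unfolding sums_def .
qed



lemma cancel_aux: fixes u A :: real assumes nz: "1 - u \<noteq> 0" "1 + u \<noteq> 0"
  shows "(A * (1 - u)) * (1 / ((1 - u) * (1 + u))) = A / (1 + u)"
proof -
  have "(1 - u) / ((1 - u) * (1 + u)) = 1 / (1 + u)" using nz by simp
  thus ?thesis by (metis times_divide_eq_right mult.assoc mult_1_right times_divide_eq_left)
qed

lemma pow_int01: "((\<lambda>x::real. x ^ m) has_integral (1 / (real m + 1))) {0..1}"
proof -
  have "((\<lambda>x::real. x ^ m) has_integral (1 ^ (m+1) / (real m + 1) - 0 ^ (m+1) / (real m + 1))) {0..1}"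
  proof (rule fundamental_theorem_of_calculus)
    fix x :: real
    show "((\<lambda>x. x ^ (m+1) / (real m + 1)) has_vector_derivative x ^ m) (at x within {0..1})"
      unfolding has_real_derivative_iff_has_vector_derivative[symmetric]
      by (rule derivative_eq_intros refl | simp)+ (simp add: field_simps)
  qed simp
  thus ?thesis by simp
qed

lemma harm_term_summable:
  assumes "a \<ge> -1/2"
  shows "summable (\<lambda>k. 1 / real (Suc k) - 1 / (real (Suc k) + a))"
proof (rule summable_comparison_test')
  have "summable (\<lambda>n. 1 / real ((n + 1)\<^sup>2))" using inverse_squares_sums by (rule sums_summable)
  hence "summable (\<lambda>n. 1 / (real n + 1)\<^sup>2)" by (simp add: add.commute)
  thus "summable (\<lambda>k. 2 * \<bar>a\<bar> * (1 / (real k + 1)\<^sup>2))" by (rule summable_mult)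
next
  fix k :: nat assume "k \<ge> 0"
  have p1: "real (Suc k) > 0" by simp
  have p2: "real (Suc k) + a \<ge> (real k + 1) / 2" using assms by simp
  have p2': "real (Suc k) + a > 0" using assms by simp
  have "1 / real (Suc k) - 1 / (real (Suc k) + a) = a / ((real k + 1) * (real (Suc k) + a))"
    using p1 p2' by (simp add: field_simps)
  hence "norm (1 / real (Suc k) - 1 / (real (Suc k) + a)) = \<bar>a\<bar> / ((real k + 1) * (real (Suc k) + a))"
    using p2' by (simp add: abs_mult)
  also have "\<dots> \<le> \<bar>a\<bar> / ((real k + 1) * ((real k + 1) / 2))"
    by (rule divide_left_mono) (use p2 p2' in \<open>auto intro!: mult_left_mono mult_pos_pos\<close>)
  also have "\<dots> = 2 * \<bar>a\<bar> * (1 / (real k + 1)\<^sup>2)" by (simp add: power2_eq_square field_simps)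
  finally show "norm (1 / real (Suc k) - 1 / (real (Suc k) + a)) \<le> 2 * \<bar>a\<bar> * (1 / (real k + 1)\<^sup>2)" .
qed

definition dd :: "nat \<Rightarrow> real" where "dd n = gen_harm (real n) - gen_harm (real n - 1/2)"

lemma dd_sums: "(\<lambda>k. 1 / (real k + real n + 1/2) - 1 / (real k + real n + 1)) sums dd n"
proof -
  have s1: "summable (\<lambda>k. 1 / real (Suc k) - 1 / (real (Suc k) + real n))" by (rule harm_term_summable) simp
  have s2: "summable (\<lambda>k. 1 / real (Suc k) - 1 / (real (Suc k) + (real n - 1/2)))" by (rule harm_term_summable) simp
  have "(\<lambda>k. (1 / real (Suc k) - 1 / (real (Suc k) + real n)) - (1 / real (Suc k) - 1 / (real (Suc k) + (real n - 1/2))))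
        sums (gen_harm (real n) - gen_harm (real n - 1/2))"
    unfolding gen_harm_def by (intro sums_diff summable_sums s1 s2)
  moreover have "(1 / real (Suc k) - 1 / (real (Suc k) + real n)) - (1 / real (Suc k) - 1 / (real (Suc k) + (real n - 1/2)))
      = 1 / (real k + real n + 1/2) - 1 / (real k + real n + 1)" for k
    by (simp add: algebra_simps)
  ultimately show ?thesis unfolding dd_def by simp
qed

lemma dd_integral: "((\<lambda>u. 2 * u ^ (2*n) / (1 + u)) has_integral dd n) {0..1}"
proof -
  define f where "f k u = 2 * u ^ (2*n) * (u ^ (2*k) - u ^ (2*k+1))" for k and u :: real
  define I where "I k = 1 / (real k + real n + 1/2) - 1 / (real k + real n + 1)" for k
  have fi: "(f k has_integral I k) {0..1}" for k
  proof -
    have "((\<lambda>u. 2 * u ^ (2*n+2*k) - 2 * u ^ (2*n+2*k+1)) has_integral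
          (2 * (1 / (real (2*n+2*k) + 1)) - 2 * (1 / (real (2*n+2*k+1) + 1)))) {0..1}"
      by (intro has_integral_diff has_integral_mult_right pow_int01)
    moreover have "(\<lambda>u::real. 2 * u ^ (2*n+2*k) - 2 * u ^ (2*n+2*k+1)) = f k"
      by (rule ext) (simp add: f_def algebra_simps power_add)
    moreover have "2 * (1 / (real (2*n+2*k) + 1)) - 2 * (1 / (real (2*n+2*k+1) + 1)) = I k"
    proof -
      have p1: "real k + real n + 1/2 > 0" "real k + real n + 1 > 0" by auto
      have "2 * (1 / (real (2*n+2*k) + 1)) = 1 / (real k + real n + 1/2)"
        using p1 by (simp add: divide_simps; simp add: algebra_simps)
      moreover have "2 * (1 / (real (2*n+2*k+1) + 1)) = 1 / (real k + real n + 1)"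
        using p1 by (simp add: divide_simps; simp add: algebra_simps)
      ultimately show ?thesis unfolding I_def by simp
    qed
    ultimately show ?thesis by simp
  qed
  have f0: "0 \<le> f k u" if "u \<in> {0..1}" for k u
  proof -
    have "u * u ^ (2*k) \<le> 1 * u ^ (2*k)" using that by (intro mult_right_mono) auto
    hence "u ^ (2*k+1) \<le> u ^ (2*k)" by simp
    thus ?thesis unfolding f_def using that by simp
  qed
  have fs: "(\<lambda>k. f k u) sums (2 * u ^ (2*n) / (1 + u))" if "u \<in> {0..<1}" for u
  proof -
    have "\<bar>u^2\<bar> < 1" using that by (simp add: abs_square_less_1)
    hence "(\<lambda>k. (u^2) ^ k) sums (1 / (1 - u^2))" by (intro geometric_sums) simp
    hence "(\<lambda>k. (2 * u ^ (2*n) * (1 - u)) * (u^2) ^ k) sums ((2 * u ^ (2*n) * (1 - u)) * (1 / (1 - u^2)))"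
      by (rule sums_mult)
    moreover have "(2 * u ^ (2*n) * (1 - u)) * (u^2) ^ k = f k u" for k
    proof -
      have "(u^2)^k = u^(2*k)" by (simp add: power_mult)
      thus ?thesis unfolding f_def by (simp add: algebra_simps)
    qed
    moreover have "(2 * u ^ (2*n) * (1 - u)) * (1 / (1 - u^2)) = 2 * u ^ (2*n) / (1 + u)"
    proof -
      have h: "1 - u^2 = (1 - u) * (1 + u)" by (simp add: power2_eq_square algebra_simps)
      have nz: "1 - u \<noteq> 0" "1 + u \<noteq> 0" using that by auto
      have "(2 * u ^ (2*n) * (1 - u)) * (1 / ((1 - u) * (1 + u))) = 2 * u ^ (2*n) / (1 + u)"
        by (rule cancel_aux[OF nz])
      thus ?thesis by (simp only: h)
    qed
    ultimately show ?thesis by simp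
  qed
  have gi: "(\<lambda>u::real. 2 * u ^ (2*n) / (1 + u)) integrable_on {0..1}"
    by (rule integrable_continuous_interval) (auto intro!: continuous_intros)
  have "I sums integral {0..1} (\<lambda>u. 2 * u ^ (2*n) / (1 + u))"
    using fi f0 fs gi by (rule series_integral_swap)
  moreover have "I sums dd n" unfolding I_def by (rule dd_sums)
  ultimately have "integral {0..1} (\<lambda>u. 2 * u ^ (2*n) / (1 + u)) = dd n" using sums_unique2 by blast
  with gi show ?thesis using integrable_integral by fastforce
qed

lemma dd_nonneg: "dd n \<ge> 0"
  by (rule has_integral_nonneg[OF dd_integral]) auto

lemma aux_trig: fixes cc ss jj SS :: real assumes h: "cc * cc + ss * ss = 1"
  shows "jj * (ss * SS) + ss * (2 * SS) = jj * (cc * (cc * (ss * SS))) + (jj * (ss * (ss * (ss * SS))) + (cc * (cc * (ss * (2 * SS))) + ss * (ss * (ss * (2 * SS)))))"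
proof -
  have "jj * (cc * (cc * (ss * SS))) + (jj * (ss * (ss * (ss * SS))) + (cc * (cc * (ss * (2 * SS))) + ss * (ss * (ss * (2 * SS))))) = (jj * (ss * SS) + ss * (2 * SS)) * (cc * cc+ss * ss)"
    by (simp add: algebra_simps)
  thus ?thesis using h by simp
qed

lemma sin_pow_rec:
  "((\<lambda>x. (real k + 2) * sin x ^ (k+2) - (real k + 1) * sin x ^ k) has_integral 0) {0..pi/2}"
proof -
  have d: "((\<lambda>x. - (sin x * sin x ^ k * cos x)) has_real_derivative
            ((real k + 2) * sin x ^ (k+2) - (real k + 1) * sin x ^ k)) (at x within {0..pi/2})" for x
  proof -
    have c: "cos x * cos x = 1 - sin x * sin x" using sin_squared_eq[of x] by (simp add: power2_eq_square)
    have e: "sin x ^ k * sin x = sin x * sin x ^ k" by simp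
    show ?thesis
    proof (cases k)
      case 0
      show ?thesis unfolding 0
        apply (rule derivative_eq_intros refl)+
        apply (simp add: power2_eq_square algebra_simps)
        done
    next
      case (Suc j)
      show ?thesis unfolding Suc
        apply (rule derivative_eq_intros refl)+
        apply (simp add: algebra_simps)
        by (rule aux_trig) (simp add: sin_cos_squared_add3)
    qed
  qed
  have "((\<lambda>x. (real k + 2) * sin x ^ (k+2) - (real k + 1) * sin x ^ k) has_integral
        ((- (sin (pi/2) * sin (pi/2) ^ k * cos (pi/2))) - (- (sin 0 * sin 0 ^ k * cos 0)))) {0..pi/2}"
    by (rule fundamental_theorem_of_calculus) (use d in \<open>auto simp: has_real_derivative_iff_has_vector_derivative\<close>)
  thus ?thesis by simp
qed

lemma wallis_int: "((\<lambda>x. sin x ^ (2*m)) has_integral (pi/2 * bb m)) {0..pi/2}"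
proof (induction m)
  case 0
  show ?case using has_integral_const_real[of "1::real" 0 "pi/2"] by (simp add: bb_def)
next
  case (Suc m)
  have "((\<lambda>x. (real (2*m) + 1) * sin x ^ (2*m)) has_integral ((real (2*m) + 1) * (pi/2 * bb m))) {0..pi/2}"
    using has_integral_mult_right[OF Suc] by simp
  from has_integral_add[OF sin_pow_rec[of "2*m"] this]
  have "((\<lambda>x. (real (2*m) + 2) * sin x ^ (2*m+2)) has_integral ((real (2*m) + 1) * (pi/2 * bb m))) {0..pi/2}"
    by simp
  from has_integral_mult_right[OF this, of "1 / (real (2*m) + 2)"]
  have h: "((\<lambda>x. 1 / (real (2*m) + 2) * ((real (2*m) + 2) * sin x ^ (2*m+2))) has_integral
      1 / (real (2*m) + 2) * ((real (2*m) + 1) * (pi/2 * bb m))) {0..pi/2}" .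
  have ef: "(\<lambda>x. 1 / (real (2*m) + 2) * ((real (2*m) + 2) * sin x ^ (2*m+2))) = (\<lambda>x. sin x ^ (2 * Suc m))"
    by (rule ext) simp
  have ev: "1 / (real (2*m) + 2) * ((real (2*m) + 1) * (pi/2 * bb m)) = pi/2 * bb (Suc m)"
    by (simp add: bb_Suc field_simps)
  show ?case using h unfolding ef ev .
qed


lemma yu_pos: fixes y u :: real assumes "0 \<le> y" "y < 1" "0 \<le> u" "u \<le> 1" shows "1 - y * u^2 > 0"
proof -
  have "u^2 \<le> 1" using assms by (simp add: power_le_one)
  hence "y * u^2 \<le> y * 1" using assms by (intro mult_left_mono) auto
  thus ?thesis using assms by simp
qed

lemma alg_E: fixes y u w s N :: real
  assumes ww: "w * w = 1 - y" and ss: "s * s = 1 - y * u^2" and s0: "s > 0" and w0: "w > 0"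
    and u0: "1 + u > 0" and NN: "N = 1 + y * u + w * s" and N0: "N > 0"
  shows "- (1/w) * ((y - w * y * u / s) / N - 1 / (1 + u)) = 1 / ((1 + u) * s)"
proof -
  have key: "(1 + u) * (y * s - w * y * u) = N * (s - w)"
  proof -
    have "N * (s - w) = s - w + y * u * s - w * y * u + w * (s * s) - (w * w) * s"
      unfolding NN by (simp add: algebra_simps)
    also have "\<dots> = (1 + u) * (y * s - w * y * u)"
      unfolding ss ww by (simp add: algebra_simps power2_eq_square)
    finally show ?thesis by simp
  qed
  have e1: "(y - w * y * u / s) = (y * s - w * y * u) / s" using s0 by (simp add: field_simps)
  have "(y - w * y * u / s) / N - 1 / (1 + u) = ((1 + u) * (y * s - w * y * u) - N * s) / (s * N * (1 + u))"
    unfolding e1 using s0 N0 u0 by (simp add: field_simps)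
  also have "\<dots> = (N * (s - w) - N * s) / (s * N * (1 + u))" unfolding key ..
  also have "\<dots> = (N * (- w)) / (N * (s * (1 + u)))" by (simp add: algebra_simps)
  also have "\<dots> = - w / (s * (1 + u))" using N0 by (rule nonzero_mult_divide_mult_cancel_left[OF less_imp_neq[symmetric]])
  finally show ?thesis using w0 by (simp add: field_simps)
qed

lemma F_deriv: fixes y u w :: real assumes y: "0 \<le> y" "y < 1" and u: "0 < u" "u < 1" and w: "w * w = 1 - y" "w > 0"
  and s: "1 - y * u^2 > 0"
  shows "((\<lambda>u. -(1/w) * (ln (1 + y*u + w * sqrt (1 - y*u^2)) - ln (1+u))) has_real_derivative
     1 / ((1+u) * sqrt (1 - y*u^2))) (at u)"
proof -
  define S where "S = sqrt (1 - y*u^2)"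
  have S0: "S > 0" unfolding S_def using s by simp
  have SS: "S * S = 1 - y * u^2" unfolding S_def using s by simp
  define N where "N = 1 + y * u + w * S"
  have N0: "N > 0" unfolding N_def using y u S0 w by (simp add: add_pos_nonneg)
  have dS: "((\<lambda>u. sqrt (1 - y*u^2)) has_real_derivative (- (y * u) / S)) (at u)"
  proof -
    have "((\<lambda>u. sqrt (1 - y*u^2)) has_real_derivative (inverse (sqrt (1 - y*u^2)) / 2 * (- (y * (2 * u)))) ) (at u)"
      by (rule DERIV_chain2[where g="\<lambda>u. 1 - y*u^2" and x=u, OF DERIV_real_sqrt[OF s]]) (auto intro!: derivative_eq_intros)
    moreover have "inverse (sqrt (1 - y*u^2)) / 2 * (- (y * (2 * u))) = - (y * u) / S"
      unfolding S_def by (simp add: field_simps)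
    ultimately show ?thesis by simp
  qed
  have dN: "((\<lambda>u. 1 + y*u + w * sqrt (1 - y*u^2)) has_real_derivative (y - w * y * u / S)) (at u)"
  proof -
    have d1: "((\<lambda>u. y*u) has_real_derivative y) (at u)" by (auto intro!: derivative_eq_intros)
    have d2: "((\<lambda>u. w * sqrt (1 - y*u^2)) has_real_derivative w * (- (y * u) / S)) (at u)"
      by (rule DERIV_cmult[OF dS])
    have "((\<lambda>u. 1 + y*u + w * sqrt (1 - y*u^2)) has_real_derivative (0 + y + w * (- (y * u) / S))) (at u)"
      by (rule DERIV_add[OF DERIV_add[OF DERIV_const d1] d2])
    thus ?thesis by (simp add: algebra_simps)
  qed
  have dL: "((\<lambda>u. ln (1 + y*u + w * sqrt (1 - y*u^2))) has_real_derivative (y - w * y * u / S) / N) (at u)"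
  proof -
    have "((\<lambda>u. ln (1 + y*u + w * sqrt (1 - y*u^2))) has_real_derivative (inverse (1 + y*u + w * sqrt (1 - y*u^2)) * (y - w * y * u / S))) (at u)"
      by (rule DERIV_chain2[where g="\<lambda>u. 1 + y*u + w * sqrt (1 - y*u^2)" and x=u, OF DERIV_ln dN]) (use N0 in \<open>simp add: N_def S_def\<close>)
    thus ?thesis by (simp add: N_def S_def divide_inverse mult.commute)
  qed
  have dL2: "((\<lambda>u::real. ln (1 + u)) has_real_derivative 1 / (1 + u)) (at u)"
  proof -
    have "((\<lambda>u::real. ln (1 + u)) has_real_derivative (inverse (1 + u) * (0 + 1))) (at u)"
      by (rule DERIV_chain2[where g="\<lambda>u. 1 + u" and x=u, OF DERIV_ln]) (use u in \<open>auto intro!: derivative_eq_intros\<close>)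
    thus ?thesis by (simp add: divide_inverse)
  qed
  have "((\<lambda>u. -(1/w) * (ln (1 + y*u + w * sqrt (1 - y*u^2)) - ln (1+u))) has_real_derivative
     - (1/w) * ((y - w * y * u / S) / N - 1 / (1 + u))) (at u)"
    by (rule DERIV_cmult[OF DERIV_diff[OF dL dL2]])
  moreover have "- (1/w) * ((y - w * y * u / S) / N - 1 / (1 + u)) = 1 / ((1+u) * S)"
    by (rule alg_E[OF w(1) SS S0 w(2) _ N_def N0]) (use u in simp)
  ultimately show ?thesis unfolding S_def by simp
qed

lemma E_FTC: fixes y :: real assumes y: "0 \<le> y" "y < 1"
  shows "((\<lambda>u. 1 / ((1+u) * sqrt (1 - y*u^2))) has_integral ln (1 + sqrt (1-y)) / sqrt (1-y)) {0..1}"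
proof -
  define w where "w = sqrt (1-y)"
  have w0: "w > 0" unfolding w_def using y by simp
  have ww: "w * w = 1 - y" unfolding w_def using y by simp
  define F where "F u = -(1/w) * (ln (1 + y*u + w * sqrt (1 - y*u^2)) - ln (1+u))" for u
  have pos: "1 + y*u + w * sqrt (1 - y*u^2) > 0" if "u \<in> {0..1}" for u
  proof -
    have "0 \<le> sqrt (1 - y*u^2)" using yu_pos[of y u] y that by simp
    hence "0 \<le> w * sqrt (1 - y*u^2)" using w0 by simp
    moreover have "0 \<le> y*u" using y that by simp
    ultimately show ?thesis by simp
  qed
  have pos': "1 + y*u + w * sqrt (1 - y*u^2) \<noteq> 0" if "0 \<le> u" "u \<le> 1" for u
    using pos[of u] that by simp
  have pos'': "1 + u \<noteq> 0" if "0 \<le> u" for u :: real using that by simp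
  have cont: "continuous_on {0..1} F"
    unfolding F_def using pos' pos'' w0 by (auto intro!: continuous_intros)
  have deriv: "(F has_vector_derivative 1 / ((1+u) * sqrt (1 - y*u^2))) (at u)" if "u \<in> box 0 1" for u
  proof -
    from that have u: "0 < u" "u < 1" by auto
    have s: "1 - y*u^2 > 0" using yu_pos[of y u] y u by simp
    have "(F has_real_derivative 1 / ((1+u) * sqrt (1 - y*u^2))) (at u)"
      unfolding F_def by (rule F_deriv[OF y u ww w0 s])
    thus ?thesis by (simp add: has_real_derivative_iff_has_vector_derivative)
  qed
  have "((\<lambda>u. 1 / ((1+u) * sqrt (1 - y*u^2))) has_integral F 1 - F 0) {0..1}"
    by (rule fundamental_theorem_of_calculus_interior) (use cont deriv in auto)
  moreover have "F 1 = 0"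
  proof -
    have "sqrt (1 - y * 1^2) = w" unfolding w_def by simp
    hence "1 + y*1 + w * sqrt (1 - y*1^2) = 2" using ww by simp
    thus ?thesis unfolding F_def by simp
  qed
  moreover have "F 0 = - (ln (1 + w) / w)" unfolding F_def by simp
  ultimately show ?thesis unfolding w_def by simp
qed

lemma E_sums: fixes y :: real assumes y: "0 \<le> y" "y < 1"
  shows "(\<lambda>n. bb n * dd n * y^n) sums (2 * ln (1 + sqrt (1-y)) / sqrt (1-y))"
proof -
  define g where "g u = 2 / ((1+u) * sqrt (1 - y*u^2))" for u :: real
  have gint: "(g has_integral 2 * ln (1 + sqrt (1-y)) / sqrt (1-y)) {0..1}"
    using has_integral_mult_right[OF E_FTC[OF y], of 2] unfolding g_def by simp
  define f where "f n u = bb n * y^n * (2 * u ^ (2*n) / (1 + u))" for n u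
  have fi: "(f n has_integral (bb n * y^n * dd n)) {0..1}" for n
    unfolding f_def by (rule has_integral_mult_right[OF dd_integral])
  have f0: "0 \<le> f n u" if "u \<in> {0..1}" for n u
    unfolding f_def using that y bb_pos[of n] by simp
  have fs: "(\<lambda>n. f n u) sums g u" if "u \<in> {0..<1}" for u
  proof -
    have "0 \<le> y * u^2" using y by simp
    moreover have "1 - y * u^2 > 0" using yu_pos[of y u] y that by simp
    ultimately have "(\<lambda>n. bb n * (y * u^2)^n) sums (1 / sqrt (1 - y * u^2))"
      by (intro bb_series) auto
    hence "(\<lambda>n. 2 / (1 + u) * (bb n * (y * u^2)^n)) sums (2 / (1 + u) * (1 / sqrt (1 - y * u^2)))"
      by (rule sums_mult)
    moreover have "2 / (1 + u) * (bb n * (y * u^2)^n) = f n u" for n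
      unfolding f_def by (simp add: power_mult_distrib power_mult[symmetric] mult.commute)
    moreover have "2 / (1 + u) * (1 / sqrt (1 - y * u^2)) = g u" unfolding g_def by simp
    ultimately show ?thesis by simp
  qed
  have "(\<lambda>n. bb n * y^n * dd n) sums integral {0..1} g"
    by (rule series_integral_swap[OF fi f0 fs]) (use gint in auto)
  moreover have "integral {0..1} g = 2 * ln (1 + sqrt (1-y)) / sqrt (1-y)" using gint by (rule integral_unique)
  ultimately show ?thesis by (simp add: mult_ac)
qed


lemma sin_lt1: fixes t :: real assumes "0 \<le> t" "t < pi/2" shows "0 \<le> sin t" "sin t < 1"
proof -
  show "0 \<le> sin t" using assms by (intro sin_ge_zero) auto
  have "sin t < sin (pi/2)" using assms by (subst sin_mono_less_eq) auto
  thus "sin t < 1" by simp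
qed

lemma theta_sums:
  assumes gint: "((\<lambda>t. ln (1 + sqrt (1 - sin t ^ 4)) / sqrt (1 - sin t ^ 4)) has_integral V) {0..pi/2}"
  shows "(\<lambda>n. bb (2*n) * bb n * dd n) sums (4 / pi * V)"
proof -
  define g where "g t = 2 / pi * (2 * (ln (1 + sqrt (1 - sin t ^ 4)) / sqrt (1 - sin t ^ 4)))" for t
  have gi: "(g has_integral 2 / pi * (2 * V)) {0..pi/2}"
    unfolding g_def by (intro has_integral_mult_right gint)
  define f where "f n t = 2 / pi * (bb n * dd n * (sin t ^ 4) ^ n)" for n t
  have fi: "(f n has_integral (bb (2*n) * bb n * dd n)) {0..pi/2}" for n
  proof -
    have "((\<lambda>t. 2 / pi * (bb n * dd n) * sin t ^ (2 * (2*n))) has_integral (2 / pi * (bb n * dd n) * (pi/2 * bb (2*n)))) {0..pi/2}"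
      by (intro has_integral_mult_right wallis_int)
    moreover have "(\<lambda>t. 2 / pi * (bb n * dd n) * sin t ^ (2 * (2*n))) = f n"
      by (rule ext) (simp add: f_def power_mult[symmetric] mult_ac)
    moreover have "2 / pi * (bb n * dd n) * (pi/2 * bb (2*n)) = bb (2*n) * bb n * dd n"
      by simp
    ultimately show ?thesis by (simp add: mult_ac)
  qed
  have f0: "0 \<le> f n t" if "t \<in> {0..pi/2}" for n t
  proof -
    have "0 \<le> sin t" using that by (intro sin_ge_zero) auto
    thus ?thesis unfolding f_def using bb_pos[of n] dd_nonneg[of n] by simp
  qed
  have fs: "(\<lambda>n. f n t) sums g t" if "t \<in> {0..<pi/2}" for t
  proof -
    have s: "0 \<le> sin t" "sin t < 1" using sin_lt1[of t] that by auto
    have y: "0 \<le> sin t ^ 4" "sin t ^ 4 < 1" using s by (auto simp: power_less_one_iff)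
    have "(\<lambda>n. bb n * dd n * (sin t ^ 4) ^ n) sums (2 * ln (1 + sqrt (1 - sin t ^ 4)) / sqrt (1 - sin t ^ 4))"
      using E_sums[OF y] .
    from sums_mult[OF this, of "2/pi"] show ?thesis unfolding f_def g_def by simp
  qed
  have "(\<lambda>n. bb (2*n) * bb n * dd n) sums integral {0..pi/2} g"
    by (rule series_integral_swap[OF fi f0 fs]) (use gi in auto)
  moreover have "integral {0..pi/2} g = 4 / pi * V" using integral_unique[OF gi] by simp
  ultimately show ?thesis by simp
qed

definition L0 :: "real \<Rightarrow> real" where "L0 z = (if z = 0 then 1 else ln (1 + z) / z)"

lemma L0_isCont: assumes "z > -1" shows "isCont L0 z"
proof (cases "z = 0")
  case True
  have "DERIV (ln::real\<Rightarrow>real) 1 :> inverse 1" using DERIV_ln[of 1] by simp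
  hence "(\<lambda>h::real. (ln (1 + h) - ln 1) / h) \<midarrow>0\<rightarrow> 1" unfolding DERIV_def by simp
  hence "(\<lambda>h::real. ln (1 + h) / h) \<midarrow>0\<rightarrow> 1" by simp
  hence "L0 \<midarrow>0\<rightarrow> 1" by (subst LIM_equal[where g="\<lambda>h::real. ln (1 + h) / h"]) (auto simp: L0_def)
  thus ?thesis using True unfolding isCont_def by (simp add: L0_def)
next
  case False
  have ev: "eventually (\<lambda>x. L0 x = ln (1 + x) / x) (nhds z)"
  proof -
    have "open (- {0::real})" by (simp add: open_Compl)
    moreover have "z \<in> - {0}" using False by simp
    ultimately have "eventually (\<lambda>x. x \<in> - {0::real}) (nhds z)" by (rule eventually_nhds_in_open)
    thus ?thesis by eventually_elim (auto simp: L0_def)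
  qed
  have "isCont (\<lambda>x. ln (1 + x) / x) z" using assms False by (auto intro!: continuous_intros)
  thus ?thesis using isCont_cong[OF ev] by simp
qed

lemma L0_cont_on: "continuous_on {0..b} L0"
  by (rule continuous_at_imp_continuous_on) (auto intro!: L0_isCont)

lemma L0_pos: "z > 0 \<Longrightarrow> L0 z = ln (1 + z) / z" by (simp add: L0_def)

definition Lam :: "real \<Rightarrow> real" where "Lam x = integral {0..x} L0"

lemma Lam_deriv: assumes "x > 0" shows "(Lam has_real_derivative L0 x) (at x)"
proof -
  have "((\<lambda>x. integral {0..x} L0) has_real_derivative L0 x) (at x within {0..x+1})"
    by (rule integral_has_real_derivative[OF L0_cont_on]) (use assms in auto)
  moreover have "at x within {0..x+1} = at x" using assms by (intro at_within_Icc_at) auto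
  ultimately show ?thesis unfolding Lam_def by simp
qed

lemma Lam_cont: "continuous_on {0..b} Lam"
  unfolding Lam_def by (rule indefinite_integral_continuous_1) (rule integrable_continuous_real[OF L0_cont_on])

lemma Lam_0: "Lam 0 = 0" unfolding Lam_def by simp

lemma Lam_inv: assumes R: "R > 0" shows "Lam R + Lam (1/R) = 2 * Lam 1 + (ln R)^2 / 2"
proof -
  define phi where "phi x = Lam x + Lam (1/x) - (ln x)^2 / 2" for x
  have d: "(phi has_real_derivative 0) (at x within {0<..})" if x: "x \<in> {0<..}" for x
  proof -
    from x have x0: "x > 0" by simp
    have d1: "((\<lambda>x. Lam (1/x)) has_real_derivative L0 (1/x) * (- 1 / x^2)) (at x)"
    proof (rule DERIV_chain2[where g="\<lambda>x. 1/x" and x=x, OF Lam_deriv])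
      show "1/x > 0" using x0 by simp
      show "((\<lambda>x. 1/x) has_real_derivative - 1 / x^2) (at x)"
        using x0 by (auto intro!: derivative_eq_intros simp: power2_eq_square)
    qed
    have d2: "((\<lambda>x. (ln x)^2 / 2) has_real_derivative ln x / x) (at x)"
      using x0 by (auto intro!: derivative_eq_intros simp: field_simps)
    have "(phi has_real_derivative (L0 x + L0 (1/x) * (- 1 / x^2) - ln x / x)) (at x)"
      unfolding phi_def by (rule DERIV_diff[OF DERIV_add[OF Lam_deriv[OF x0] d1] d2])
    moreover have "L0 x + L0 (1/x) * (- 1 / x^2) - ln x / x = 0"
    proof -
      have "L0 (1/x) = ln (1 + 1/x) * x" using x0 by (simp add: L0_def)
      also have "ln (1 + 1/x) = ln (1 + x) - ln x"
      proof -
        have "1 + 1/x = (1 + x) / x" using x0 by (simp add: field_simps)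
        thus ?thesis using x0 by (simp add: ln_div)
      qed
      finally have e: "L0 (1/x) = (ln (1 + x) - ln x) * x" .
      show ?thesis unfolding e using x0 by (simp add: L0_def field_simps power2_eq_square)
    qed
    ultimately show ?thesis by (simp add: has_field_derivative_at_within)
  qed
  obtain c where c: "\<forall>x\<in>{0<..}. phi x = c"
    using has_field_derivative_zero_constant[of "{0<..}" phi] d by auto
  have "phi R = phi 1" using c R by simp
  thus ?thesis unfolding phi_def by simp
qed

lemma odd_even_sq_sums: "(\<lambda>k. 1 / (2 * real k + 1)^2 - 1 / (2 * real k + 2)^2) sums (pi^2 / 12)"
proof -
  define a where "a n = 1 / (real n + 1)^2" for n :: nat
  have as: "a sums (pi^2 / 6)"
  proof -
    have "(\<lambda>n. 1 / real ((n + 1)\<^sup>2)) sums (pi\<^sup>2 / 6)" by (rule inverse_squares_sums)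
    moreover have "(\<lambda>n. 1 / real ((n + 1)\<^sup>2)) = a" by (rule ext) (simp add: a_def add.commute)
    ultimately show ?thesis by simp
  qed
  have g: "(\<lambda>k. sum a {k * 2 ..< k * 2 + 2}) sums (pi^2 / 6)" using sums_group[OF as, of 2] by simp
  have gs: "sum a {k * 2 ..< k * 2 + 2} = 1 / (2 * real k + 1)^2 + 1 / (2 * real k + 2)^2" for k
  proof -
    have "{k * 2 ..< k * 2 + 2} = {2*k, 2*k+1}" by auto
    thus ?thesis by (simp add: a_def algebra_simps)
  qed
  have h1: "(\<lambda>k. 1 / (2 * real k + 1)^2 + 1 / (2 * real k + 2)^2) sums (pi^2 / 6)" using g unfolding gs .
  have h2: "(\<lambda>k. 2 * (1/4 * a k)) sums (2 * (1/4 * (pi^2 / 6)))" by (intro sums_mult as)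
  have e2: "2 * (1/4 * a k) = 2 * (1 / (2 * real k + 2)^2)" for k
  proof -
    have "(2 * real k + 2)^2 = 4 * (real k + 1)^2" by (simp add: power2_eq_square algebra_simps)
    thus ?thesis unfolding a_def by simp
  qed
  have H: "(\<lambda>k. (1 / (2 * real k + 1)^2 + 1 / (2 * real k + 2)^2) - 2 * (1/4 * a k)) sums (pi^2 / 6 - 2 * (1/4 * (pi^2 / 6)))"
    by (rule sums_diff[OF h1 h2])
  have F: "(\<lambda>k. (1 / (2 * real k + 1)^2 + 1 / (2 * real k + 2)^2) - 2 * (1/4 * a k)) = (\<lambda>k. 1 / (2 * real k + 1)^2 - 1 / (2 * real k + 2)^2)"
  proof (rule ext)
    fix k
    show "(1 / (2 * real k + 1)^2 + 1 / (2 * real k + 2)^2) - 2 * (1/4 * a k) = 1 / (2 * real k + 1)^2 - 1 / (2 * real k + 2)^2"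
      unfolding e2 by simp
  qed
  have C: "pi^2 / 6 - 2 * (1/4 * (pi^2 / 6)) = pi^2 / 12" by simp
  show ?thesis using H unfolding F C .
qed

lemma ln_series_z: assumes z: "0 < z" "z < 1" shows "(\<lambda>n. (-1)^n * z^n / (real n + 1)) sums (ln (1 + z) / z)"
proof -
  have sm: "summable (\<lambda>n. (-1)^n * (1 / real (n + 1)) * ((1 + z) - 1)^(Suc n))"
  proof (rule summable_comparison_test')
    have "summable (\<lambda>n. z^n)" using z by (intro summable_geometric) auto
    hence "summable (\<lambda>n. z * z^n)" by (rule summable_mult)
    thus "summable (\<lambda>n. z^(Suc n))" by simp
  next
    fix n :: nat assume "n \<ge> 0"
    have "norm ((-1)^n * (1 / real (n + 1)) * ((1 + z) - 1)^(Suc n)) = z^(Suc n) / real (n+1)"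
      using z by (simp add: abs_mult power_abs)
    also have "\<dots> \<le> z^(Suc n)" using z by (simp add: divide_le_eq)
    finally show "norm ((-1)^n * (1 / real (n + 1)) * ((1 + z) - 1)^(Suc n)) \<le> z^(Suc n)" .
  qed
  have "ln (1 + z) = (\<Sum> n. (-1)^n * (1 / real (n + 1)) * ((1 + z) - 1)^(Suc n))"
    using z by (intro ln_series) auto
  with sm have "(\<lambda>n. (-1)^n * (1 / real (n + 1)) * ((1 + z) - 1)^(Suc n)) sums ln (1 + z)"
    by (simp add: sums_iff)
  from sums_divide[OF this, of z]
  have "(\<lambda>n. (-1)^n * (1 / real (n + 1)) * ((1 + z) - 1)^(Suc n) / z) sums (ln (1 + z) / z)" .
  moreover have "(-1)^n * (1 / real (n + 1)) * ((1 + z) - 1)^(Suc n) / z = (-1)^n * z^n / (real n + 1)" for n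
  proof -
    have "(-1)^n * (1 / real (n + 1)) * ((1 + z) - 1)^(Suc n) / z = (-1)^n * (1 / real (n + 1)) * ((z * z^n) / z)"
      by simp
    also have "(z * z^n) / z = z^n" using z by simp
    finally show ?thesis by (simp add: add.commute)
  qed
  ultimately show ?thesis by simp
qed

lemma Lam1: "Lam 1 = pi^2 / 12"
proof -
  define f where "f k z = z^(2*k) / (2 * real k + 1) - z^(2*k+1) / (2 * real k + 2)" for k and z :: real
  define I where "I k = 1 / (2 * real k + 1)^2 - 1 / (2 * real k + 2)^2" for k
  have fi: "(f k has_integral I k) {0..1}" for k
  proof -
    have "((\<lambda>z::real. 1 / (2 * real k + 1) * z^(2*k) - 1 / (2 * real k + 2) * z^(2*k+1)) has_integral
        (1 / (2 * real k + 1) * (1 / (real (2*k) + 1)) - 1 / (2 * real k + 2) * (1 / (real (2*k+1) + 1)))) {0..1}"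
      by (intro has_integral_diff has_integral_mult_right pow_int01)
    moreover have "(\<lambda>z::real. 1 / (2 * real k + 1) * z^(2*k) - 1 / (2 * real k + 2) * z^(2*k+1)) = f k"
      by (rule ext) (simp add: f_def)
    moreover have "1 / (2 * real k + 1) * (1 / (real (2*k) + 1)) - 1 / (2 * real k + 2) * (1 / (real (2*k+1) + 1)) = I k"
      unfolding I_def by (simp add: power2_eq_square add.commute add.left_commute)
    ultimately show ?thesis by simp
  qed
  have f0: "0 \<le> f k z" if "z \<in> {0..1}" for k z
  proof -
    have z: "0 \<le> z" "z \<le> 1" using that by auto
    have "z * z^(2*k) \<le> 1 * z^(2*k)" using z by (intro mult_right_mono) auto
    hence a: "z^(2*k+1) \<le> z^(2*k)" by simp
    have "z^(2*k+1) / (2 * real k + 2) \<le> z^(2*k) / (2 * real k + 2)"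
      using a by (intro divide_right_mono) auto
    also have "\<dots> \<le> z^(2*k) / (2 * real k + 1)"
      using z by (intro divide_left_mono) auto
    finally show ?thesis unfolding f_def by simp
  qed
  have fs: "(\<lambda>k. f k z) sums L0 z" if "z \<in> {0..<1}" for z
  proof (cases "z = 0")
    case True
    have "(\<lambda>k. if k = 0 then 1 else 0) sums (1::real)" using sums_single[of 0 "\<lambda>_. 1::real"] by simp
    moreover have "f k 0 = (if k = 0 then 1 else 0)" for k by (simp add: f_def)
    ultimately show ?thesis using True by (simp add: L0_def)
  next
    case False
    hence z: "0 < z" "z < 1" using that by auto
    have "(\<lambda>k. sum (\<lambda>n. (-1)^n * z^n / (real n + 1)) {k * 2 ..< k * 2 + 2}) sums (ln (1 + z) / z)"
      using sums_group[OF ln_series_z[OF z], of 2] by simp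
    moreover have "sum (\<lambda>n. (-1)^n * z^n / (real n + 1)) {k * 2 ..< k * 2 + 2} = f k z" for k
    proof -
      have "{k * 2 ..< k * 2 + 2} = {2*k, 2*k+1}" by auto
      thus ?thesis by (simp add: f_def algebra_simps)
    qed
    ultimately show ?thesis using z by (simp add: L0_def)
  qed
  have gi: "L0 integrable_on {0..1}" by (rule integrable_continuous_real[OF L0_cont_on])
  have "I sums integral {0..1} L0" by (rule series_integral_swap[OF fi f0 fs gi])
  moreover have "I sums (pi^2 / 12)" unfolding I_def by (rule odd_even_sq_sums)
  ultimately show ?thesis unfolding Lam_def using sums_unique2 by blast
qed

definition aa :: real where "aa = 3 + 2 * sqrt 2"
definition bq :: real where "bq = 3 - 2 * sqrt 2"

lemma aa_bq: "aa * bq = 1" "aa + bq = 6" "aa > 0" "bq > 0" "aa \<le> 6" "bq = 1 / aa"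
proof -
  have s2: "sqrt 2 * sqrt 2 = (2::real)" by simp
  show ab: "aa * bq = 1" unfolding aa_def bq_def by (simp add: algebra_simps s2)
  show "aa + bq = 6" unfolding aa_def bq_def by simp
  show a0: "aa > 0" unfolding aa_def by (simp add: add_pos_nonneg)
  have "sqrt 2 < (3/2::real)"
    by (rule real_less_lsqrt) (auto simp: power2_eq_square)
  thus "bq > 0" unfolding bq_def by simp
  thus "aa \<le> 6" using \<open>aa + bq = 6\<close> by simp
  show "bq = 1 / aa" using ab a0 by (simp add: field_simps)
qed

lemma aa_ln: "ln aa = 2 * ln (1 + sqrt 2)"
proof -
  have "aa = (1 + sqrt 2)^2" unfolding aa_def by (simp add: power2_eq_square algebra_simps)
  hence "ln aa = ln ((1 + sqrt 2)^2)" by simp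
  also have "\<dots> = 2 * ln (1 + sqrt 2)" by (subst ln_realpow) (auto simp: add_pos_nonneg)
  finally show ?thesis .
qed

definition Psi :: "real \<Rightarrow> real" where
  "Psi y = 4 * Lam y - Lam (aa * y^2) / 2 - Lam (bq * y^2) / 2"

definition hh :: "real \<Rightarrow> real" where
  "hh y = (4 * ln (1 + y) - ln (1 + 6 * y^2 + y^4)) / y"

lemma Lam_comp_deriv: assumes c: "c > 0" and y: "y > 0"
  shows "((\<lambda>y. Lam (c * y^2) / 2) has_real_derivative ln (1 + c * y^2) / y) (at y)"
proof -
  have cy: "c * y^2 > 0" using c y by simp
  have "((\<lambda>y. Lam (c * y^2)) has_real_derivative L0 (c * y^2) * (c * (2 * y))) (at y)"
    by (rule DERIV_chain2[where g="\<lambda>y. c * y^2" and x=y, OF Lam_deriv[OF cy]]) (auto intro!: derivative_eq_intros)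
  hence "((\<lambda>y. Lam (c * y^2) / 2) has_real_derivative L0 (c * y^2) * (c * (2 * y)) / 2) (at y)"
    by (rule DERIV_cdivide)
  moreover have "L0 (c * y^2) * (c * (2 * y)) / 2 = ln (1 + c * y^2) / y"
    using cy c y by (simp add: L0_pos field_simps power2_eq_square)
  ultimately show ?thesis by simp
qed

lemma Psi_deriv: assumes y: "y > 0" shows "(Psi has_real_derivative hh y) (at y)"
proof -
  have d: "(Psi has_real_derivative (4 * L0 y - ln (1 + aa * y^2) / y - ln (1 + bq * y^2) / y)) (at y)"
    unfolding Psi_def
    by (rule DERIV_diff[OF DERIV_diff[OF DERIV_cmult[OF Lam_deriv[OF y]] Lam_comp_deriv] Lam_comp_deriv])
       (use y aa_bq in auto)
  have p1: "1 + aa * y^2 > 0" "1 + bq * y^2 > 0" using aa_bq y by (auto intro: add_pos_nonneg)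
  have "(1 + aa * y^2) * (1 + bq * y^2) = 1 + (aa + bq) * y^2 + (aa * bq) * y^4"
    by (simp add: algebra_simps power2_eq_square power4_eq_xxxx)
  also have "\<dots> = 1 + 6 * y^2 + y^4" using aa_bq by simp
  finally have pr: "(1 + aa * y^2) * (1 + bq * y^2) = 1 + 6 * y^2 + y^4" .
  have "ln (1 + aa * y^2) + ln (1 + bq * y^2) = ln (1 + 6 * y^2 + y^4)"
    using p1 pr ln_mult[of "1 + aa * y^2" "1 + bq * y^2"] by simp
  hence e: "ln (1 + 6 * y^2 + y^4) = ln (1 + aa * y^2) + ln (1 + bq * y^2)" by simp
  have "4 * L0 y - ln (1 + aa * y^2) / y - ln (1 + bq * y^2) / y = hh y"
    using y unfolding hh_def e by (simp add: L0_pos diff_divide_distrib add_divide_distrib)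
  with d show ?thesis by simp
qed

lemma Psi_cont: "continuous_on {0..1} Psi"
proof -
  have c1: "continuous_on {0..1} (\<lambda>y. Lam (c * y^2))" if c: "0 < c" "c \<le> 6" for c
  proof (rule continuous_on_compose2[OF Lam_cont[of 6]])
    show "continuous_on {0..1} (\<lambda>y::real. c * y^2)" by (intro continuous_intros)
    show "(\<lambda>y. c * y^2) ` {0..1} \<subseteq> {0..6}"
    proof
      fix t assume "t \<in> (\<lambda>y. c * y^2) ` {0..(1::real)}"
      then obtain y where y: "y \<in> {0..1}" "t = c * y^2" by auto
      have "y^2 \<le> 1" using y by (simp add: power_le_one)
      hence "c * y^2 \<le> c * 1" using c by (intro mult_left_mono) auto
      hence "c * y^2 \<le> 6" using c by linarith
      moreover have "0 \<le> c * y^2" using c by simp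
      ultimately show "t \<in> {0..6}" using y by auto
    qed
  qed
  have "continuous_on {0..1} (\<lambda>y. 4 * Lam y - Lam (aa * y^2) / 2 - Lam (bq * y^2) / 2)"
    using continuous_on_subset[OF Lam_cont[of 1]] c1[of aa] c1[of bq] aa_bq
    by (intro continuous_intros) auto
  thus ?thesis unfolding Psi_def .
qed

lemma Psi_1: "Psi 1 = pi^2 / 4 - (ln (1 + sqrt 2))^2"
proof -
  have "Lam aa + Lam (1/aa) = 2 * Lam 1 + (ln aa)^2 / 2" using aa_bq by (intro Lam_inv) auto
  hence "Lam aa + Lam bq = 2 * (pi^2/12) + (2 * ln (1 + sqrt 2))^2 / 2"
    using aa_bq(6) Lam1 aa_ln by simp
  thus ?thesis unfolding Psi_def using Lam1 by (simp add: power2_eq_square algebra_simps)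
qed

lemma hh_integral: "(hh has_integral (pi^2 / 4 - (ln (1 + sqrt 2))^2)) {0..1}"
proof -
  have dv: "(Psi has_vector_derivative hh y) (at y)" if "y \<in> box 0 1" for y
  proof -
    from that have "y > 0" by auto
    thus ?thesis using Psi_deriv by (simp add: has_real_derivative_iff_has_vector_derivative)
  qed
  have "(hh has_integral (Psi 1 - Psi 0)) {0..1}"
    by (rule fundamental_theorem_of_calculus_interior) (use Psi_cont dv in auto)
  moreover have "Psi 0 = 0" unfolding Psi_def by (simp add: Lam_0)
  ultimately show ?thesis using Psi_1 by simp
qed

definition Dv :: "real \<Rightarrow> real" where "Dv y = 1 + 6 * y^2 + y^4"

lemma Dv_pos: "Dv y \<ge> 1" "Dv y > 0"
proof -
  have "0 \<le> 6 * y^2 + y^4" by (simp add: add_nonneg_nonneg)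
  thus "Dv y \<ge> 1" unfolding Dv_def by simp
  thus "Dv y > 0" by simp
qed

lemma Dv_id1: "Dv y - (1 - y^2)^2 = 8 * y^2"
  unfolding Dv_def by (simp add: power2_eq_square power4_eq_xxxx algebra_simps)

lemma Dv_id2: "(Dv y)^2 - (1 - y^2)^4 = (4 * y * (1 + y^2))^2"
  unfolding Dv_def by (simp add: power2_eq_square power4_eq_xxxx algebra_simps)

lemma Dv_id3: "Dv y + 4 * y * (1 + y^2) = (1 + y)^4"
  unfolding Dv_def by (simp add: power2_eq_square power4_eq_xxxx algebra_simps)

lemma Dv_deriv: "(Dv has_real_derivative (12 * y + 4 * y^3)) (at y)"
  unfolding Dv_def
  apply (rule derivative_eq_intros refl)+
  apply (simp add: algebra_simps power2_eq_square power3_eq_cube)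
  done

definition Xf :: "real \<Rightarrow> real" where "Xf y = (1 - y^2) / sqrt (Dv y)"

lemma Xf_range: assumes "0 \<le> y" "y \<le> 1" shows "0 \<le> Xf y" "Xf y \<le> 1"
proof -
  have a: "0 \<le> 1 - y^2" using assms by (simp add: power_le_one)
  have s: "sqrt (Dv y) > 0" using Dv_pos by simp
  show "0 \<le> Xf y" unfolding Xf_def using a s by simp
  have "0 \<le> 8 * y^2" by simp
  hence "(1 - y^2)^2 \<le> Dv y" using Dv_id1[of y] by linarith
  hence "1 - y^2 \<le> sqrt (Dv y)" by (rule real_le_rsqrt)
  thus "Xf y \<le> 1" unfolding Xf_def using s by simp
qed

lemma Xf_range': assumes "0 < y" "y < 1" shows "-1 < Xf y" "Xf y < 1"
proof -
  have s: "sqrt (Dv y) > 0" using Dv_pos by simp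
  show "-1 < Xf y" using Xf_range[of y] assms by simp
  have "0 < 8 * y^2" using assms by simp
  hence "(1 - y^2)^2 < Dv y" using Dv_id1[of y] by linarith
  hence "1 - y^2 < sqrt (Dv y)" by (rule real_less_rsqrt)
  thus "Xf y < 1" unfolding Xf_def using s by simp
qed

lemma one_minus_Xf_sq: "1 - (Xf y)^2 = 8 * y^2 / Dv y"
proof -
  have d: "Dv y > 0" using Dv_pos by simp
  have "(Xf y)^2 = (1 - y^2)^2 / Dv y" unfolding Xf_def using d by (simp add: power_divide)
  thus ?thesis using Dv_id1[of y] d by (simp add: field_simps)
qed

lemma algX: fixes y S :: real assumes SS: "S * S = 1 + 6*y^2 + y^4" and S0: "S > 0"
  shows "(-(2*y) * S - (1 - y^2) * (inverse S / 2 * (12*y + 4*y^3))) / (S * S) = -8*y*(1+y^2) / ((1 + 6*y^2 + y^4) * S)"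
proof -
  have "-(2*y) * S - (1 - y^2) * (inverse S / 2 * (12*y + 4*y^3)) = (-(2*y) * (S*S) - (1-y^2)*(6*y+2*y^3)) / S"
    using S0 by (simp add: field_simps)
  also have "-(2*y) * (S*S) - (1-y^2)*(6*y+2*y^3) = -8*y*(1+y^2)"
    unfolding SS by (simp add: power2_eq_square power4_eq_xxxx power3_eq_cube algebra_simps)
  finally have "-(2*y) * S - (1 - y^2) * (inverse S / 2 * (12*y + 4*y^3)) = -8*y*(1+y^2) / S" .
  hence "(-(2*y) * S - (1 - y^2) * (inverse S / 2 * (12*y + 4*y^3))) / (S * S) = -8*y*(1+y^2) / ((S * S) * S)"
    by simp
  thus ?thesis by (simp only: SS)
qed

lemma Xf_deriv: "(Xf has_real_derivative (-8*y*(1+y^2) / (Dv y * sqrt (Dv y)))) (at y)"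
proof -
  define S where "S = sqrt (Dv y)"
  have S0: "S > 0" unfolding S_def using Dv_pos by simp
  have SS: "S * S = 1 + 6*y^2 + y^4" unfolding S_def using Dv_pos[of y] by (simp add: Dv_def[symmetric])
  have dS: "((\<lambda>y. sqrt (Dv y)) has_real_derivative (inverse S / 2 * (12*y + 4*y^3))) (at y)"
    unfolding S_def by (rule DERIV_chain2[where g=Dv and x=y, OF DERIV_real_sqrt Dv_deriv]) (use Dv_pos in simp)
  have d1: "((\<lambda>y. 1 - y^2) has_real_derivative -(2*y)) (at y)"
    by (auto intro!: derivative_eq_intros)
  have "(Xf has_real_derivative ((-(2*y) * S - (1 - y^2) * (inverse S / 2 * (12*y + 4*y^3))) / (S * S))) (at y)"
    unfolding Xf_def using DERIV_divide[OF d1 dS] S0 by (simp add: S_def)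
  also have "(-(2*y) * S - (1 - y^2) * (inverse S / 2 * (12*y + 4*y^3))) / (S * S) = -8*y*(1+y^2) / (Dv y * sqrt (Dv y))"
    using algX[OF SS S0] by (simp add: Dv_def S_def)
  finally show ?thesis .
qed

definition gsub :: "real \<Rightarrow> real" where "gsub y = arcsin (Xf y)"
definition gder :: "real \<Rightarrow> real" where "gder y = - 2 * sqrt 2 * (1 + y^2) / Dv y"
definition Gt :: "real \<Rightarrow> real" where "Gt t = L0 (sqrt (1 - sin t ^ 4))"

lemma sqrt8: "sqrt (8::real) = 2 * sqrt 2"
proof -
  have "sqrt (8::real) = sqrt (2^2 * 2)" by simp
  also have "\<dots> = sqrt (2^2) * sqrt 2" by (rule real_sqrt_mult)
  also have "sqrt ((2::real)^2) = 2" by (metis abs_numeral real_sqrt_abs)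
  finally show ?thesis .
qed

lemma gsub_deriv: assumes y: "0 < y" "y < 1" shows "(gsub has_real_derivative gder y) (at y)"
proof -
  have r: "-1 < Xf y" "Xf y < 1" using Xf_range'[OF y] by auto
  have "(gsub has_real_derivative (inverse (sqrt (1 - (Xf y)^2)) * (-8*y*(1+y^2) / (Dv y * sqrt (Dv y))))) (at y)"
    unfolding gsub_def by (rule DERIV_chain2[where g=Xf and x=y, OF DERIV_arcsin[OF r] Xf_deriv])
  moreover have "inverse (sqrt (1 - (Xf y)^2)) * (-8*y*(1+y^2) / (Dv y * sqrt (Dv y))) = gder y"
  proof -
    have d: "Dv y > 0" using Dv_pos by simp
    have sD: "sqrt (Dv y) > 0" using d by simp
    have "sqrt (1 - (Xf y)^2) = sqrt (8 * y^2 / Dv y)" by (simp add: one_minus_Xf_sq)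
    also have "\<dots> = 2 * sqrt 2 * y / sqrt (Dv y)"
      using y by (simp add: real_sqrt_divide real_sqrt_mult sqrt8)
    finally have e: "sqrt (1 - (Xf y)^2) = 2 * sqrt 2 * y / sqrt (Dv y)" .
    have s2: "sqrt 2 * sqrt 2 = (2::real)" by simp
    show ?thesis unfolding e gder_def using y d sD
      by (simp add: field_simps)
  qed
  ultimately show ?thesis by simp
qed

lemma gsub_cont: "continuous_on {0..1} gsub"
proof -
  have cD: "continuous_on {0..1} Dv" unfolding Dv_def by (intro continuous_intros)
  have nz: "sqrt (Dv y) \<noteq> 0" for y using Dv_pos[of y] by simp
  have cX: "continuous_on {0..1} Xf"
    unfolding Xf_def using nz by (intro continuous_intros cD) auto
  show ?thesis unfolding gsub_def
  proof (rule continuous_on_compose2[OF continuous_on_arcsin' cX])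
    show "Xf ` {0..1} \<subseteq> {-1..1}"
    proof
      fix t assume "t \<in> Xf ` {0..1}"
      then obtain y where y: "y \<in> {0..1}" "t = Xf y" by auto
      from Xf_range[of y] y show "t \<in> {-1..1}" by auto
    qed
  qed
qed

lemma gsub_range: assumes "0 \<le> y" "y \<le> 1" shows "gsub y \<in> {0..pi/2}"
proof -
  have r: "0 \<le> Xf y" "Xf y \<le> 1" using Xf_range[OF assms] by auto
  have "arcsin 0 \<le> arcsin (Xf y)" using r by (intro arcsin_le_arcsin) auto
  moreover have "arcsin (Xf y) \<le> arcsin 1" using r by (intro arcsin_le_arcsin) auto
  ultimately show ?thesis unfolding gsub_def by simp
qed

lemma gsub_0: "gsub 0 = pi/2" unfolding gsub_def Xf_def Dv_def by simp
lemma gsub_1: "gsub 1 = 0" unfolding gsub_def Xf_def Dv_def by simp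

lemma Gt_cont: "continuous_on {0..pi/2} Gt"
proof -
  have c: "continuous_on {0..pi/2} (\<lambda>t. sqrt (1 - sin t ^ 4))" by (intro continuous_intros)
  have r: "sqrt (1 - sin t ^ 4) \<in> {0..1}" for t
  proof -
    have "\<bar>sin t\<bar> ^ 4 \<le> 1" by (intro power_le_one) (auto simp: abs_sin_le_one)
    hence "sin t ^ 4 \<le> 1" by simp
    moreover have "0 \<le> sin t ^ 4" by (simp add: zero_le_even_power)
    ultimately show ?thesis by auto
  qed
  show ?thesis unfolding Gt_def
    by (rule continuous_on_compose2[OF L0_cont_on[of 1] c]) (use r in auto)
qed

lemma pointwise: assumes y: "0 < y" "y < 1" shows "gder y * Gt (gsub y) = - (sqrt 2 / 2) * hh y"
proof -
  have d: "Dv y > 0" using Dv_pos by simp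
  have r: "-1 \<le> Xf y" "Xf y \<le> 1" using Xf_range'[OF y] by auto
  have sg: "sin (gsub y) = Xf y" unfolding gsub_def using r by (simp add: sin_arcsin)
  have x4: "(Xf y)^4 = (1 - y^2)^4 / (Dv y)^2"
  proof -
    have "(Xf y)^4 = (1 - y^2)^4 / (sqrt (Dv y))^4" unfolding Xf_def by (simp add: power_divide)
    also have "(sqrt (Dv y))^4 = (Dv y)^2"
    proof -
      have "(sqrt (Dv y))^4 = (sqrt (Dv y))^2 * (sqrt (Dv y))^2" by (simp flip: power_add)
      thus ?thesis using d by (simp add: power2_eq_square)
    qed
    finally show ?thesis .
  qed
  define W where "W = 4 * y * (1 + y^2) / Dv y"
  have W0: "W > 0" unfolding W_def using y d by (intro divide_pos_pos mult_pos_pos) (auto simp: add_pos_nonneg)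
  have "1 - (Xf y)^4 = ((Dv y)^2 - (1 - y^2)^4) / (Dv y)^2"
    unfolding x4 using d by (simp add: diff_divide_distrib)
  also have "\<dots> = (4 * y * (1 + y^2))^2 / (Dv y)^2" by (simp only: Dv_id2)
  also have "\<dots> = W^2" unfolding W_def by (simp add: power_divide)
  finally have "1 - (Xf y)^4 = W^2" .
  hence sq: "sqrt (1 - sin (gsub y) ^ 4) = W" unfolding sg using W0 by simp
  have GW: "Gt (gsub y) = ln (1 + W) / W" unfolding Gt_def sq using W0 by (simp add: L0_pos)
  have "1 + W = (1 + y)^4 / Dv y" unfolding W_def using d Dv_id3[of y] by (simp add: field_simps)
  hence "ln (1 + W) = 4 * ln (1 + y) - ln (Dv y)"
    using d y by (simp add: ln_div ln_realpow)
  hence GW2: "Gt (gsub y) = (4 * ln (1 + y) - ln (Dv y)) / W" using GW by simp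
  define L where "L = 4 * ln (1 + y) - ln (Dv y)"
  have hL: "hh y = L / y" unfolding hh_def L_def Dv_def by simp
  have p: "1 + y^2 > 0" by (simp add: add_pos_nonneg)
  have nz: "y \<noteq> 0" "Dv y \<noteq> 0" "1 + y^2 \<noteq> 0" using y d p by auto
  have "gder y * Gt (gsub y) = (- 2 * sqrt 2 * (1 + y^2) * Dv y) * L / ((Dv y * (1 + y^2)) * (4 * y))"
    unfolding GW2 W_def gder_def L_def[symmetric] using nz by (simp add: field_simps)
  also have "\<dots> = (Dv y * (1 + y^2)) * (- 2 * sqrt 2 * L) / ((Dv y * (1 + y^2)) * (4 * y))"
    by (simp add: algebra_simps)
  also have "\<dots> = (- 2 * sqrt 2 * L) / (4 * y)"
    using nz by (intro nonzero_mult_divide_mult_cancel_left) simp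
  also have "\<dots> = - (sqrt 2 / 2) * hh y" unfolding hL using nz by (simp add: field_simps)
  finally show ?thesis .
qed

lemma Gt_integral: "(Gt has_integral (sqrt 2 / 2 * (pi^2 / 4 - (ln (1 + sqrt 2))^2))) {0..pi/2}"
proof -
  have sub: "((\<lambda>y. gder y *\<^sub>R Gt (gsub y)) has_integral
      (integral {gsub 0..gsub 1} Gt - integral {gsub 1..gsub 0} Gt)) {0..1}"
  proof (rule has_integral_substitution_general[of "{0,1}" 0 1 gsub 0 "pi/2" Gt gder])
    show "gsub ` {0..1} \<subseteq> {0..pi/2}" using gsub_range by auto
    show "continuous_on {0..pi/2} Gt" by (rule Gt_cont)
    show "continuous_on {0..1} gsub" by (rule gsub_cont)
    fix x :: real assume "x \<in> {0..1} - {0,1}"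
    hence x: "0 < x" "x < 1" by (auto simp: less_le)
    show "(gsub has_real_derivative gder x) (at x within {0..1})"
      by (rule has_field_derivative_at_within[OF gsub_deriv[OF x]])
  qed auto
  hence "((\<lambda>y. gder y * Gt (gsub y)) has_integral (- integral {0..pi/2} Gt)) {0..1}"
    by (simp add: gsub_0 gsub_1)
  hence h1: "((\<lambda>y. - (sqrt 2 / 2) * hh y) has_integral (- integral {0..pi/2} Gt)) {0..1}"
    by (rule has_integral_spike_finite[of "{0,1}", rotated 2]) (auto simp: pointwise)
  have h2: "((\<lambda>y. - (sqrt 2 / 2) * hh y) has_integral (- (sqrt 2 / 2) * (pi^2 / 4 - (ln (1 + sqrt 2))^2))) {0..1}"
    by (intro has_integral_mult_right hh_integral)
  have eq: "integral {0..pi/2} Gt = sqrt 2 / 2 * (pi^2 / 4 - (ln (1 + sqrt 2))^2)"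
    using has_integral_unique[OF h1 h2] by simp
  have hi: "(Gt has_integral integral {0..pi/2} Gt) {0..pi/2}"
    by (rule integrable_integral[OF integrable_continuous_real[OF Gt_cont]])
  show ?thesis using hi unfolding eq .
qed

lemma Gf_integral: "((\<lambda>t. ln (1 + sqrt (1 - sin t ^ 4)) / sqrt (1 - sin t ^ 4)) has_integral
    (sqrt 2 / 2 * (pi^2 / 4 - (ln (1 + sqrt 2))^2))) {0..pi/2}"
proof (rule has_integral_spike_finite[OF _ _ Gt_integral, of "{pi/2}"])
  fix t assume t: "t \<in> {0..pi/2} - {pi/2}"
  hence "0 \<le> t" "t < pi/2" by (auto simp: less_le)
  hence s: "0 \<le> sin t" "sin t < 1" using sin_lt1 by auto
  have "sin t ^ 4 < 1" using s by (simp add: power_less_one_iff)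
  hence "sqrt (1 - sin t ^ 4) > 0" by simp
  thus "ln (1 + sqrt (1 - sin t ^ 4)) / sqrt (1 - sin t ^ 4) = Gt t"
    unfolding Gt_def by (simp add: L0_pos)
qed simp

lemma term_eq: "real ((4*n) choose (2*n)) * real ((2*n) choose n)
            * (gen_harm (real n) - gen_harm (real n - 1/2)) / 64 ^ n = bb (2*n) * bb n * dd n"
proof -
  have "(4::real) ^ (2*n) * 4 ^ n = 4 ^ (2*n + n)" by (rule power_add[symmetric])
  also have "\<dots> = 4 ^ (3 * n)" by simp
  also have "\<dots> = (4 ^ 3) ^ n" by (rule power_mult)
  also have "(4::real) ^ 3 = 64" by simp
  finally have "(64::real) ^ n = 4 ^ (2*n) * 4 ^ n" by simp
  moreover have "2 * (2 * n) = 4 * n" by simp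
  ultimately show ?thesis unfolding bb_def dd_def by (simp add: field_simps)
qed

lemma val_alg: fixes r L :: real assumes s2: "r * r = 2" and r0: "r > 0"
  shows "4 / pi * (r / 2 * (pi^2 / 4 - L^2)) = pi / r - 2 * r / pi * L^2"
proof -
  have p: "pi / r = r * pi / 2"
  proof -
    have "pi / r = (r * r) * pi / (2 * r)" unfolding s2 using r0 by simp
    also have "\<dots> = r * pi / 2" using r0 by simp
    finally show ?thesis .
  qed
  have "4 / pi * (r / 2 * (pi^2 / 4 - L^2)) = r * pi / 2 - 2 * r / pi * L^2"
    using pi_gt_zero by (simp add: field_simps power2_eq_square)
  thus ?thesis unfolding p .
qed

theorem mainTheorem4:
  shows "(\<lambda>n::nat. real ((4*n) choose (2*n)) * real ((2*n) choose n)
            * (gen_harm (real n) - gen_harm (real n - 1/2)) / 64 ^ n)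
         sums (pi / sqrt 2 - 2 * sqrt 2 / pi * (ln (sqrt 2 + 1))^2)"
proof -
  have h: "(\<lambda>n. bb (2*n) * bb n * dd n) sums (4 / pi * (sqrt 2 / 2 * (pi^2 / 4 - (ln (1 + sqrt 2))^2)))"
    by (rule theta_sums[OF Gf_integral])
  have v: "4 / pi * (sqrt 2 / 2 * (pi^2 / 4 - (ln (1 + sqrt 2))^2)) = pi / sqrt 2 - 2 * sqrt 2 / pi * (ln (sqrt 2 + 1))^2"
    using val_alg[of "sqrt 2" "ln (1 + sqrt 2)"] by (simp add: add.commute)
  show ?thesis using h unfolding v term_eq .
qed

end
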